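(* Let $F$ be a rooted directed forest on $n \geq 1$ vertices and let $k \geq 2$ be a natural number. Then $\psi_b(F,k) \geq \frac{n+k}{2k}$. Moreover, this lower bound is tight (it is attained whenever the expression $\frac{n+k}{2k}$ is an integer).
   Context: A rooted directed forest is a disjoint union of rooted trees, each with all edges oriented away from its root. In a rooted directed forest, a leaf is a vertex of out-degree $0$ (this includes isolated vertices), and a branching vertex is a vertex of out-degree at least $2$. A set $P$ of vertices of $F$ is a branching $k$-path vertex cover of $F$ if every leaf of $F$ belongs to $P$ and every directed path on $k$ vertices (of length $k-1$) in $F$ contains a branching vertex or a vertex of $P$. The branching $k$-path vertex cover number $\psi_b(F,k)$ is the minimum size of a branching $k$-path vertex cover of $F$. *)

theory Defs
  imports Complex_Main
begin

text \<open>A rooted directed forest is given by a finite vertex set V and an edge relation E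
(E u v: arc from u to v, oriented away from the root). It is a disjoint union of
out-trees iff every vertex has in-degree at most one and there is no directed cycle.\<close>

definition rooted_forest :: "'a set \<Rightarrow> ('a \<Rightarrow> 'a \<Rightarrow> bool) \<Rightarrow> bool" where
  "rooted_forest V E \<longleftrightarrow> finite V
     \<and> (\<forall>u v. E u v \<longrightarrow> u \<in> V \<and> v \<in> V)
     \<and> (\<forall>u u' v. E u v \<and> E u' v \<longrightarrow> u = u')
     \<and> (\<forall>v. \<not> E\<^sup>+\<^sup>+ v v)"

definition out_deg :: "'a set \<Rightarrow> ('a \<Rightarrow> 'a \<Rightarrow> bool) \<Rightarrow> 'a \<Rightarrow> nat" where
  "out_deg V E v = card {w \<in> V. E v w}"

definition is_leaf :: "'a set \<Rightarrow> ('a \<Rightarrow> 'a \<Rightarrow> bool) \<Rightarrow> 'a \<Rightarrow> bool" where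
  "is_leaf V E v \<longleftrightarrow> v \<in> V \<and> out_deg V E v = 0"

definition is_branching :: "'a set \<Rightarrow> ('a \<Rightarrow> 'a \<Rightarrow> bool) \<Rightarrow> 'a \<Rightarrow> bool" where
  "is_branching V E v \<longleftrightarrow> v \<in> V \<and> out_deg V E v \<ge> 2"

definition dpath :: "'a set \<Rightarrow> ('a \<Rightarrow> 'a \<Rightarrow> bool) \<Rightarrow> nat \<Rightarrow> 'a list \<Rightarrow> bool" where
  "dpath V E k xs \<longleftrightarrow> length xs = k \<and> set xs \<subseteq> V \<and> distinct xs
     \<and> (\<forall>i. Suc i < k \<longrightarrow> E (xs ! i) (xs ! Suc i))"

definition is_bkpvc :: "'a set \<Rightarrow> ('a \<Rightarrow> 'a \<Rightarrow> bool) \<Rightarrow> nat \<Rightarrow> 'a set \<Rightarrow> bool" where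
  "is_bkpvc V E k P \<longleftrightarrow> P \<subseteq> V
     \<and> (\<forall>v. is_leaf V E v \<longrightarrow> v \<in> P)
     \<and> (\<forall>xs. dpath V E k xs \<longrightarrow> (\<exists>v \<in> set xs. is_branching V E v \<or> v \<in> P))"

definition psi_b :: "'a set \<Rightarrow> ('a \<Rightarrow> 'a \<Rightarrow> bool) \<Rightarrow> nat \<Rightarrow> nat" where
  "psi_b V E k = Min {card P | P. is_bkpvc V E k P}"

end

theory Submission imports Defs begin

lemma root_exists:
  assumes rf: "rooted_forest V E" and ne: "V \<noteq> {}"
  shows "\<exists>r\<in>V. \<forall>u. \<not> E u r"
proof -
  let ?r = "{(u,v). E u v}"
  have fin: "finite V" and inV: "\<And>u v. E u v \<Longrightarrow> u \<in> V \<and> v \<in> V"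
    and acyc: "\<And>v. \<not> E\<^sup>+\<^sup>+ v v" using rf unfolding rooted_forest_def by auto
  have "?r \<subseteq> V \<times> V" using inV by auto
  hence fr: "finite ?r" using fin by (meson finite_SigmaI rev_finite_subset)
  have eq: "\<And>a b. (a,b) \<in> ?r\<^sup>+ \<longleftrightarrow> E\<^sup>+\<^sup>+ a b"
    by (simp add: tranclp_unfold)
  have "acyclic ?r" unfolding acyclic_def using acyc eq by blast
  hence "wf ?r" using fr finite_acyclic_wf by blast
  then obtain z where z: "z \<in> V" "\<And>y. (y, z) \<in> ?r \<Longrightarrow> y \<notin> V"
    using ne wfE_min' by metis
  thus ?thesis using inV by blast
qed

lemma unique_parent_pow:
  fixes E :: "'a \<Rightarrow> 'a \<Rightarrow> bool"
  assumes up: "\<forall>u u' v. E u v \<and> E u' v \<longrightarrow> u = u'"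
  shows "(E ^^ s) u w \<Longrightarrow> (E ^^ s) v w \<Longrightarrow> u = v"
proof (induction s arbitrary: w)
  case 0 thus ?case by simp
next
  case (Suc s)
  from Suc.prems(1) obtain y where y: "(E ^^ s) u y" "E y w" by (auto elim: relpowp_Suc_E)
  from Suc.prems(2) obtain y' where y': "(E ^^ s) v y'" "E y' w" by (auto elim: relpowp_Suc_E)
  have "y = y'" using up y(2) y'(2) by blast
  thus ?case using Suc.IH y y' by blast
qed

lemma chain_tranclp:
  assumes "\<forall>i<m. E (f i) (f (Suc i))"
  shows "i < j \<Longrightarrow> j \<le> m \<Longrightarrow> E\<^sup>+\<^sup>+ (f i) (f j)"
proof (induction j)
  case 0 thus ?case by simp
next
  case (Suc j)
  have e: "E (f j) (f (Suc j))" using assms Suc.prems by auto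
  show ?case
  proof (cases "i = j")
    case True thus ?thesis using e by auto
  next
    case False
    hence "E\<^sup>+\<^sup>+ (f i) (f j)" using Suc by auto
    thus ?thesis using e by auto
  qed
qed


lemma lower_main:
  fixes V :: "'a set" and E :: "'a \<Rightarrow> 'a \<Rightarrow> bool"
  assumes rf: "rooted_forest V E" and ne: "V \<noteq> {}" and k2: "k \<ge> 2"
    and cov: "is_bkpvc V E k P"
  shows "card V + k \<le> 2 * k * card P"
proof -
  have fin: "finite V" and inV: "\<And>u v. E u v \<Longrightarrow> u \<in> V \<and> v \<in> V"
    and acyc: "\<And>v. \<not> E\<^sup>+\<^sup>+ v v" using rf unfolding rooted_forest_def by auto
  have up: "\<And>u u' v. E u v \<Longrightarrow> E u' v \<Longrightarrow> u = u'"
    using rf unfolding rooted_forest_def by blast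
  have PV: "P \<subseteq> V" and LP0: "\<And>v. is_leaf V E v \<Longrightarrow> v \<in> P"
    and pc: "\<And>xs. dpath V E k xs \<Longrightarrow> (\<exists>v \<in> set xs. is_branching V E v \<or> v \<in> P)"
    using cov unfolding is_bkpvc_def by auto
  define L where "L = {v\<in>V. out_deg V E v = 0}"
  define B where "B = {v\<in>V. 2 \<le> out_deg V E v}"
  define S where "S = P \<union> B"
  have finP: "finite P" using PV fin finite_subset by blast
  have finB: "finite B" using fin unfolding B_def by simp
  have finS: "finite S" using finP finB unfolding S_def by simp
  have LP: "L \<subseteq> P" using LP0 unfolding L_def is_leaf_def by auto
  have cardL: "card L \<le> card P" using LP finP card_mono by blast
  have cB: "card B + 1 \<le> card L"
  proof -
    define Sg where "Sg = (SIGMA v:V. {w\<in>V. E v w})"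
    have s1: "card Sg = (\<Sum>v\<in>V. out_deg V E v)"
      unfolding Sg_def out_deg_def using fin by (simp add: card_SigmaI)
    have injs: "inj_on snd Sg" unfolding Sg_def inj_on_def using up by auto
    obtain r where r: "r \<in> V" "\<And>u. \<not> E u r" using root_exists[OF rf ne] by blast
    have "snd ` Sg \<subseteq> V - {r}" unfolding Sg_def using r by auto
    hence "card (snd ` Sg) \<le> card (V - {r})" using fin by (simp add: card_mono)
    hence s2: "card Sg \<le> card V - 1" using card_image[OF injs] r fin by simp
    have s3: "(\<Sum>v\<in>V. (if v \<in> L then 0 else 1) + (if v \<in> B then 1 else 0)) \<le> (\<Sum>v\<in>V. out_deg V E v)"
      by (rule sum_mono) (auto simp: L_def B_def)
    have s4: "(\<Sum>v\<in>V. (if v \<in> L then 0 else 1) + (if v \<in> B then 1 else (0::nat))) = card (V - L) + card B"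
    proof -
      have a: "(\<Sum>v\<in>V. (if v \<in> L then 0 else (1::nat))) = card (V - L)"
        using fin by (simp add: sum.If_cases Diff_eq)
      have b: "(\<Sum>v\<in>V. (if v \<in> B then 1 else (0::nat))) = card B"
        using fin by (simp add: sum.If_cases B_def Int_def conj_commute)
      show ?thesis using a b by (simp add: sum.distrib)
    qed
    have "card (V - L) = card V - card L" using fin by (simp add: L_def card_Diff_subset)
    moreover have "card L \<le> card V" using fin by (simp add: L_def card_mono)
    moreover have "card V \<ge> 1" using ne fin by (simp add: Suc_leI card_gt_0_iff)
    ultimately show ?thesis using s1 s2 s3 s4 by linarith
  qed
  define ch where "ch x = (SOME y. y \<in> V \<and> E x y)" for x
  have ch_prop: "ch x \<in> V \<and> E x (ch x)" if "x \<in> V" "x \<notin> S" for x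
  proof -
    have "\<not> is_leaf V E x" using that LP0 unfolding S_def by blast
    hence "out_deg V E x \<noteq> 0" using that unfolding is_leaf_def by simp
    hence "{w\<in>V. E x w} \<noteq> {}" unfolding out_deg_def by (metis card.empty)
    hence "\<exists>y. y \<in> V \<and> E x y" by blast
    thus ?thesis unfolding ch_def by (rule someI_ex)
  qed
  have iter: "(ch^^s) x \<in> V \<and> (E^^s) x ((ch^^s) x)"
    if "x \<in> V" "\<forall>i<s. (ch^^i) x \<notin> S" for x s
    using that
  proof (induction s)
    case 0 thus ?case by simp
  next
    case (Suc s)
    hence h: "(ch^^s) x \<in> V" "(E^^s) x ((ch^^s) x)" "(ch^^s) x \<notin> S" by auto
    from ch_prop[OF h(1) h(3)] have "ch ((ch^^s) x) \<in> V" "E ((ch^^s) x) (ch ((ch^^s) x))" by auto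
    thus ?case using h(2) by (auto intro: relpowp_Suc_I)
  qed
  have reach: "\<exists>s<k. (ch^^s) x \<in> S" if xV: "x \<in> V" for x
  proof (rule ccontr)
    assume nr: "\<not> ?thesis"
    define f where "f i = (ch^^i) x" for i
    have fV: "f i \<in> V" "f i \<notin> S" if "i < k" for i
      using iter[OF xV, of i] nr that unfolding f_def by auto
    have fE: "\<forall>i<k-1. E (f i) (f (Suc i))"
    proof (intro allI impI)
      fix i assume "i < k - 1"
      hence "i < k" by simp
      from ch_prop[OF fV[OF this]] show "E (f i) (f (Suc i))" unfolding f_def by simp
    qed
    have dp: "dpath V E k (map f [0..<k])"
      unfolding dpath_def
    proof (intro conjI allI impI)
      show "length (map f [0..<k]) = k" by simp
      show "set (map f [0..<k]) \<subseteq> V" using fV by auto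
      show "distinct (map f [0..<k])"
        unfolding distinct_conv_nth
      proof (intro allI impI)
        fix i j assume ij: "i < length (map f [0..<k])" "j < length (map f [0..<k])" "i \<noteq> j"
        show "map f [0..<k] ! i \<noteq> map f [0..<k] ! j"
        proof
          assume eq: "map f [0..<k] ! i = map f [0..<k] ! j"
          hence eq': "f i = f j" using ij by simp
          show False
          proof (cases "i < j")
            case True
            hence "E\<^sup>+\<^sup>+ (f i) (f j)" using chain_tranclp[of "k - 1" E f, OF fE] ij by simp
            thus False using eq' acyc by metis
          next
            case False
            hence "j < i" using ij by simp
            hence "E\<^sup>+\<^sup>+ (f j) (f i)" using chain_tranclp[of "k - 1" E f, OF fE] ij by simp
            thus False using eq' acyc by metis
          qed
        qed
      qed
      fix i assume "Suc i < k"
      thus "E (map f [0..<k] ! i) (map f [0..<k] ! Suc i)" using fE by simp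
    qed
    from pc[OF dp] obtain v where v: "v \<in> set (map f [0..<k])" "is_branching V E v \<or> v \<in> P" by blast
    then obtain i where i: "i < k" "v = f i" by auto
    have "v \<in> S" using v(2) unfolding S_def B_def is_branching_def by auto
    thus False using fV(2)[OF i(1)] i(2) by simp
  qed
  define sv where "sv x = (LEAST s. (ch^^s) x \<in> S)" for x
  define g where "g x = ((ch^^(sv x)) x, sv x)" for x
  have sv_prop: "sv x < k \<and> (ch^^(sv x)) x \<in> S \<and> (\<forall>i<sv x. (ch^^i) x \<notin> S)" if xV: "x \<in> V" for x
  proof -
    obtain s where s: "s < k" "(ch^^s) x \<in> S" using reach[OF xV] by blast
    have "sv x \<le> s" unfolding sv_def using s(2) by (rule Least_le)
    moreover have "(ch^^(sv x)) x \<in> S" unfolding sv_def using s(2) by (rule LeastI)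
    moreover have "\<forall>i<sv x. (ch^^i) x \<notin> S" unfolding sv_def using not_less_Least by blast
    ultimately show ?thesis using s(1) by simp
  qed
  have gmap: "g ` V \<subseteq> S \<times> {..<k}" unfolding g_def using sv_prop by auto
  have ginj: "inj_on g V"
  proof (rule inj_onI)
    fix x y assume xy: "x \<in> V" "y \<in> V" "g x = g y"
    hence eqs: "sv x = sv y" "(ch^^(sv x)) x = (ch^^(sv y)) y" unfolding g_def by auto
    have "(E^^(sv x)) x ((ch^^(sv x)) x)" using iter[OF xy(1)] sv_prop[OF xy(1)] by blast
    moreover have "(E^^(sv y)) y ((ch^^(sv y)) y)" using iter[OF xy(2)] sv_prop[OF xy(2)] by blast
    hence "(E^^(sv x)) y ((ch^^(sv x)) x)" using eqs by simp
    moreover have "\<forall>u u' v. E u v \<and> E u' v \<longrightarrow> u = u'" using up by blast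
    ultimately show "x = y" using unique_parent_pow by metis
  qed
  have "card V \<le> card (S \<times> {..<k})"
    using card_inj_on_le[OF ginj gmap] finS by simp
  hence c1: "card V \<le> card S * k" by (simp add: card_cartesian_product)
  have "card S \<le> card P + card B" unfolding S_def by (rule card_Un_le)
  hence "card S + 1 \<le> 2 * card P" using cB cardL by linarith
  hence "(card S + 1) * k \<le> (2 * card P) * k" by (rule mult_right_mono) simp
  thus ?thesis using c1 by (simp add: algebra_simps)
qed


definition Ec :: "nat \<Rightarrow> nat \<Rightarrow> nat \<Rightarrow> nat \<Rightarrow> bool" where
  "Ec k N u v \<longleftrightarrow> u < N \<and> v < N \<and> ((v = Suc u \<and> v mod k \<noteq> 0) \<or>
     (v mod k = 0 \<and> k \<le> v \<and> u = ((v div k - 1) div 2) * k + (k - 1)))"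

lemma Ec_lt:
  assumes "k \<ge> 1" "Ec k N u v" shows "u < v"
proof -
  consider "v = Suc u" | "v mod k = 0" "k \<le> v" "u = ((v div k - 1) div 2) * k + (k - 1)"
    using assms(2) unfolding Ec_def by argo
  thus ?thesis
  proof cases
    case 1 thus ?thesis by simp
  next
    case 2
    define j where "j = v div k"
    have v: "v = j * k" using 2(1) unfolding j_def by (metis div_mult_mod_eq add_0_right)
    have j1: "j \<ge> 1" using 2(2) v assms(1) by (metis mult_1 mult_le_cancel2 not_less_eq_eq order_trans le_numeral_extra(4) nat_mult_1 Suc_leI not_gr0 mult_0)
    have "(j - 1) div 2 \<le> j - 1" by simp
    hence "((j - 1) div 2) * k \<le> (j - 1) * k" by (rule mult_right_mono) simp
    moreover have "(j - 1) * k + k = j * k" using j1 by (metis Suc_diff_1 less_eq_Suc_le add.commute mult_Suc zero_less_one order_less_le_trans)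
    ultimately show ?thesis using 2(3) v assms(1) unfolding j_def by linarith
  qed
qed

lemma Ec_parent:
  assumes "Ec k N u v"
  shows "u = (if v mod k = 0 then ((v div k - 1) div 2) * k + (k - 1) else v - 1)"
proof (cases "v mod k = 0")
  case True
  have "\<not> (v = Suc u \<and> v mod k \<noteq> 0)" using True by blast
  hence "u = ((v div k - 1) div 2) * k + (k - 1)" using assms unfolding Ec_def by argo
  thus ?thesis using True by simp
next
  case False
  hence "v = Suc u" using assms unfolding Ec_def by argo
  thus ?thesis using False by simp
qed

lemma Ec_forest:
  assumes k: "k \<ge> 2" shows "rooted_forest {..<N} (Ec k N)"
  unfolding rooted_forest_def
proof (intro conjI allI impI)
  show "finite {..<N}" by simp
  fix u v assume "Ec k N u v" thus "u \<in> {..<N}" "v \<in> {..<N}" unfolding Ec_def by auto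
next
  fix u u' v assume a: "Ec k N u v \<and> Ec k N u' v"
  show "u = u'"
    by (subst Ec_parent[OF conjunct1[OF a]], subst Ec_parent[OF conjunct2[OF a]], rule refl)
next
  fix v
  have "(Ec k N)\<^sup>+\<^sup>+ a b \<Longrightarrow> a < b" for a b
  proof (induction rule: tranclp_induct)
    case (base y) thus ?case using Ec_lt[of k N a y] k by simp
  next
    case (step y z) thus ?case using Ec_lt[of k N y z] k by simp
  qed
  thus "\<not> (Ec k N)\<^sup>+\<^sup>+ v v" by blast
qed

lemma Ec_nonspecial:
  assumes "k \<ge> 1" "Ec k N u v" "u mod k \<noteq> k - 1" shows "v = Suc u"
proof -
  have "(q * k + (k - 1)) mod k = k - 1" for q
  proof -
    have "(q * k + (k - 1)) mod k = (k - 1) mod k" by (rule mod_mult_self3)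
    also have "\<dots> = k - 1" using assms(1) by simp
    finally show ?thesis .
  qed
  thus ?thesis using assms unfolding Ec_def by metis
qed

lemma Ec_child1:
  assumes k: "k \<ge> 2" and N: "N = k * (2*m - 1)" and v: "v < N" "v mod k = k - 1" "v div k < m - 1"
  shows "Ec k N v ((2 * (v div k) + 1) * k)" "Ec k N v ((2 * (v div k) + 2) * k)"
proof -
  define j where "j = v div k"
  have vj: "v = j * k + (k - 1)" using v(2) unfolding j_def by (metis div_mult_mod_eq)
  have kp: "k > 0" using k by simp
  have a: "(2*j+1) < 2*m - 1" "(2*j+2) < 2*m - 1" using v(3) unfolding j_def by auto
  have b: "(2*j+1) * k < N" "(2*j+2) * k < N"
    using mult_strict_left_mono[OF a(1) kp] mult_strict_left_mono[OF a(2) kp] unfolding N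
    by (simp_all only: mult.commute)
  have d1: "(2*j+1) * k div k = 2*j+1" "(2*j+2) * k div k = 2*j+2" using kp by simp_all
  have m1: "(2*j+1) * k mod k = 0" "(2*j+2) * k mod k = 0" by simp_all
  have l1: "k \<le> (2*j+1) * k" "k \<le> (2*j+2) * k" by simp_all
  have q1: "(2*j+1 - 1) div 2 = j" "(2*j+2 - 1) div 2 = j" by simp_all
  show "Ec k N v ((2 * (v div k) + 1) * k)"
    unfolding Ec_def j_def[symmetric] d1 q1
    by (intro conjI disjI2 v(1) b m1 l1 vj)
  show "Ec k N v ((2 * (v div k) + 2) * k)"
    unfolding Ec_def j_def[symmetric] d1 q1
    by (intro conjI disjI2 v(1) b m1 l1 vj)
qed

lemma Ec_leaf_in_P:
  assumes k: "k \<ge> 2" and N: "N = k * (2*m - 1)" and v: "v < N" and od: "out_deg {..<N} (Ec k N) v = 0"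
  shows "v mod k = k - 1 \<and> m - 1 \<le> v div k"
proof -
  have emp: "\<not> Ec k N v w" if "w < N" for w
  proof
    assume "Ec k N v w"
    hence "w \<in> {w \<in> {..<N}. Ec k N v w}" using that by simp
    moreover have "finite {w \<in> {..<N}. Ec k N v w}" by simp
    ultimately show False using od unfolding out_deg_def by (metis card_0_eq empty_iff)
  qed
  have kp: "k > 0" using k by simp
  have m1: "v mod k = k - 1"
  proof (rule ccontr)
    assume ns: "v mod k \<noteq> k - 1"
    have "v mod k < k" using kp by simp
    hence "Suc (v mod k) \<noteq> k" using ns by linarith
    hence "Suc v mod k \<noteq> 0" unfolding mod_Suc by simp
    moreover have "Suc v < N"
    proof (rule ccontr)
      assume "\<not> Suc v < N"
      hence "Suc v = N" using v by simp
      hence "Suc v mod k = 0" unfolding N by simp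
      thus False using `Suc v mod k \<noteq> 0` by simp
    qed
    ultimately have "Ec k N v (Suc v)" unfolding Ec_def using v by (intro conjI disjI1) simp_all
    thus False using emp `Suc v < N` by blast
  qed
  moreover have "m - 1 \<le> v div k"
  proof (rule ccontr)
    assume "\<not> m - 1 \<le> v div k"
    hence "Ec k N v ((2 * (v div k) + 1) * k)" using Ec_child1(1)[OF k N v m1] by simp
    moreover hence "(2 * (v div k) + 1) * k < N" unfolding Ec_def by (rule conjunct1[OF conjunct2])
    ultimately show False using emp by blast
  qed
  ultimately show ?thesis by simp
qed

lemma Ec_branch:
  assumes k: "k \<ge> 2" and N: "N = k * (2*m - 1)" and v: "v < N" "v mod k = k - 1" "v div k < m - 1"
  shows "is_branching {..<N} (Ec k N) v"
proof -
  define a where "a = (2 * (v div k) + 1) * k"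
  define b where "b = (2 * (v div k) + 2) * k"
  define S where "S = {w \<in> {..<N}. Ec k N v w}"
  have ea: "Ec k N v a" and eb: "Ec k N v b" using Ec_child1[OF k N v] unfolding a_def b_def by auto
  have "a < N" "b < N" using ea eb unfolding Ec_def by auto
  hence sub: "{a, b} \<subseteq> S" using ea eb unfolding S_def by simp
  have "a \<noteq> b" using k unfolding a_def b_def by simp
  hence c2: "card {a, b} = 2" by simp
  have fin: "finite S" unfolding S_def by simp
  have "card {a, b} \<le> card S" by (rule card_mono[OF fin sub])
  hence "2 \<le> out_deg {..<N} (Ec k N) v" using c2 unfolding out_deg_def S_def by simp
  thus ?thesis unfolding is_branching_def using v(1) by simp
qed

lemma Ec_path:
  assumes k: "k \<ge> 2" and dp: "dpath {..<N} (Ec k N) k xs"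
  shows "\<exists>v \<in> set xs. v mod k = k - 1"
proof (rule ccontr)
  assume ns: "\<not> ?thesis"
  have len: "length xs = k" and ed: "\<And>i. Suc i < k \<Longrightarrow> Ec k N (xs ! i) (xs ! Suc i)"
    using dp unfolding dpath_def by auto
  have nsi: "(xs ! i) mod k \<noteq> k - 1" if "i < k" for i using ns len that nth_mem by metis
  have kp: "k > 0" using k by simp
  have claim: "i < k \<Longrightarrow> (xs ! i) mod k = (xs ! 0) mod k + i" for i
  proof (induction i)
    case 0 thus ?case by simp
  next
    case (Suc i)
    have lt: "i < k" using Suc.prems by simp
    have ni: "(xs ! i) mod k \<noteq> k - 1" using nsi[OF lt] .
    have e: "xs ! Suc i = Suc (xs ! i)" by (rule Ec_nonspecial[OF _ ed[OF Suc.prems] ni]) (use k in simp)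
    have ih: "(xs ! i) mod k = (xs ! 0) mod k + i" using Suc.IH lt by simp
    have "(xs ! i) mod k < k" using kp by simp
    hence ns2: "Suc ((xs ! i) mod k) \<noteq> k" using ni by linarith
    have "(xs ! Suc i) mod k = Suc ((xs ! i) mod k)" unfolding e mod_Suc using ns2 by simp
    thus ?case using ih by simp
  qed
  define i0 where "i0 = k - 1 - (xs ! 0) mod k"
  have "i0 < k" unfolding i0_def using kp by simp
  moreover have "(xs ! 0) mod k < k" using kp by simp
  ultimately have "(xs ! 0) mod k + i0 = k - 1" unfolding i0_def by linarith
  moreover have "(xs ! i0) mod k = (xs ! 0) mod k + i0" using claim[OF `i0 < k`] .
  ultimately have "(xs ! i0) mod k = k - 1" by simp
  thus False using nsi[OF `i0 < k`] by simp
qed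


lemma V_cover:
  assumes "k \<ge> 1" shows "is_bkpvc V E k V"
  unfolding is_bkpvc_def
proof (intro conjI allI impI)
  show "V \<subseteq> V" by simp
  fix v assume "is_leaf V E v" thus "v \<in> V" unfolding is_leaf_def by simp
next
  fix xs assume d: "dpath V E k xs"
  hence "xs \<noteq> []" "set xs \<subseteq> V" using assms unfolding dpath_def by auto
  thus "\<exists>v\<in>set xs. is_branching V E v \<or> v \<in> V" by (metis list.set_sel(1) subsetD)
qed

lemma psi_fin:
  assumes "finite V" shows "finite {card P | P. is_bkpvc V E k P}"
proof -
  have "{card P | P. is_bkpvc V E k P} \<subseteq> card ` Pow V"
  proof
    fix x assume "x \<in> {card P | P. is_bkpvc V E k P}"
    then obtain P where P: "x = card P" "is_bkpvc V E k P" by blast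
    hence "P \<subseteq> V" unfolding is_bkpvc_def by blast
    thus "x \<in> card ` Pow V" using P(1) by blast
  qed
  moreover have "finite (card ` Pow V)" using assms by simp
  ultimately show ?thesis by (rule finite_subset)
qed

lemma psi_le:
  assumes "finite V" "is_bkpvc V E k P" shows "psi_b V E k \<le> card P"
proof -
  have "card P \<in> {card P | P. is_bkpvc V E k P}" using assms(2) by blast
  thus ?thesis unfolding psi_b_def by (rule Min_le[OF psi_fin[OF assms(1)]])
qed

lemma psi_attained:
  assumes "finite V" "k \<ge> 1" shows "\<exists>P. is_bkpvc V E k P \<and> card P = psi_b V E k"
proof -
  have "card V \<in> {card P | P. is_bkpvc V E k P}" using V_cover[OF assms(2)] by blast
  hence "{card P | P. is_bkpvc V E k P} \<noteq> {}" by blast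
  hence "psi_b V E k \<in> {card P | P. is_bkpvc V E k P}" unfolding psi_b_def
    by (rule Min_in[OF psi_fin[OF assms(1)]])
  thus ?thesis by auto
qed

lemma part1:
  fixes V :: "'a set" and E :: "'a \<Rightarrow> 'a \<Rightarrow> bool"
  assumes rf: "rooted_forest V E" and n: "card V = n" "n \<ge> 1" and k: "k \<ge> 2"
  shows "real (psi_b V E k) \<ge> (real n + real k) / (2 * real k)"
proof -
  have fin: "finite V" using rf unfolding rooted_forest_def by simp
  have ne: "V \<noteq> {}" using n by auto
  obtain P where P: "is_bkpvc V E k P" "card P = psi_b V E k" using psi_attained[OF fin, of k E] k by auto
  have "card V + k \<le> 2 * k * card P" by (rule lower_main[OF rf ne k P(1)])
  hence "real (card V + k) \<le> real (2 * k * card P)" by (simp only: of_nat_le_iff)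
  hence le: "real n + real k \<le> 2 * real k * real (psi_b V E k)" using n P(2) by simp
  have pos: "0 \<le> 2 * real k" by simp
  have "(real n + real k) / (2 * real k) \<le> (2 * real k * real (psi_b V E k)) / (2 * real k)"
    by (rule divide_right_mono[OF le pos])
  also have "\<dots> = real (psi_b V E k)" using k by simp
  finally show ?thesis .
qed

lemma part2:
  assumes n: "n \<ge> 1" and k: "k \<ge> 2" and dv: "(2 * k) dvd (n + k)"
  shows "\<exists>(V :: nat set) E. rooted_forest V E \<and> card V = n \<and>
          real (psi_b V E k) = (real n + real k) / (2 * real k)"
proof -
  obtain m where m: "n + k = 2 * k * m" using dv unfolding dvd_def by blast
  have m1: "m \<ge> 1" using m n by (cases m) auto
  have N0: "k * (2 * m - 1) = k * (2 * m) - k" by (simp add: diff_mult_distrib2)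
  have "k * (2 * m) = 2 * k * m" by (simp only: mult.assoc mult.left_commute)
  hence N: "n = k * (2 * m - 1)" using m N0 by linarith
  define P where "P = {v. v < n \<and> v mod k = k - 1 \<and> m - 1 \<le> v div k}"
  have kp: "k > 0" using k by simp
  have Peq: "P = (\<lambda>j. j * k + (k - 1)) ` {m - 1..<2 * m - 1}"
  proof (intro equalityI subsetI)
    fix v assume v: "v \<in> P"
    have "v < n" using v unfolding P_def by simp
    hence "v < (2 * m - 1) * k" unfolding N by (simp only: mult.commute)
    hence "v div k < 2 * m - 1" by (rule less_mult_imp_div_less)
    moreover have "v = v div k * k + (k - 1)"
    proof -
      have "v mod k = k - 1" using v unfolding P_def by blast
      moreover have "v = v div k * k + v mod k" by (rule div_mult_mod_eq[symmetric])
      ultimately show ?thesis by simp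
    qed
    moreover have "m - 1 \<le> v div k" using v unfolding P_def by blast
    ultimately show "v \<in> (\<lambda>j. j * k + (k - 1)) ` {m - 1..<2 * m - 1}"
      by (intro image_eqI[of _ _ "v div k"]) simp_all
  next
    fix v assume "v \<in> (\<lambda>j. j * k + (k - 1)) ` {m - 1..<2 * m - 1}"
    then obtain j where j: "m - 1 \<le> j" "j < 2 * m - 1" "v = j * k + (k - 1)" by auto
    have "j * k + (k - 1) < (j + 1) * k" using kp by simp
    also have "\<dots> \<le> (2 * m - 1) * k" using j(2) by (intro mult_right_mono) auto
    finally have "v < n" using j(3) N by (simp add: mult.commute)
    moreover have "v mod k = k - 1"
    proof -
      have "(j * k + (k - 1)) mod k = (k - 1) mod k" by (rule mod_mult_self3)
      thus ?thesis using j(3) kp by simp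
    qed
    moreover have "v div k = j"
    proof -
      have "(j * k + (k - 1)) div k = j + (k - 1) div k" using kp by (intro div_mult_self3) simp
      thus ?thesis using j(3) kp by simp
    qed
    ultimately show "v \<in> P" unfolding P_def using j by simp
  qed
  have "inj_on (\<lambda>j. j * k + (k - 1)) {m - 1..<2 * m - 1}"
  proof (rule inj_onI)
    fix x y assume "x * k + (k - 1) = y * k + (k - 1)"
    hence "x * k = y * k" by (rule add_right_imp_eq)
    thus "x = y" using kp by simp
  qed
  hence cP: "card P = m" unfolding Peq using m1 by (simp add: card_image)
  have rf: "rooted_forest {..<n} (Ec k n)" by (rule Ec_forest[OF k])
  have cov: "is_bkpvc {..<n} (Ec k n) k P"
    unfolding is_bkpvc_def
  proof (intro conjI allI impI)
    show "P \<subseteq> {..<n}" unfolding P_def by auto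
    fix v assume "is_leaf {..<n} (Ec k n) v"
    hence "v < n" "out_deg {..<n} (Ec k n) v = 0" unfolding is_leaf_def by auto
    thus "v \<in> P" using Ec_leaf_in_P[OF k N] unfolding P_def by blast
  next
    fix xs assume dp: "dpath {..<n} (Ec k n) k xs"
    obtain v where v: "v \<in> set xs" "v mod k = k - 1" using Ec_path[OF k dp] by blast
    have vn: "v < n" using dp v(1) unfolding dpath_def by auto
    show "\<exists>v\<in>set xs. is_branching {..<n} (Ec k n) v \<or> v \<in> P"
    proof (cases "v div k < m - 1")
      case True thus ?thesis using Ec_branch[OF k N vn v(2)] v(1) by blast
    next
      case False thus ?thesis using v vn unfolding P_def by auto
    qed
  qed
  have le: "psi_b {..<n} (Ec k n) k \<le> m" using psi_le[OF _ cov] cP by simp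
  have ge: "real (psi_b {..<n} (Ec k n) k) \<ge> (real n + real k) / (2 * real k)"
    by (rule part1[OF rf _ n k]) simp
  have eq: "(real n + real k) / (2 * real k) = real m"
  proof -
    have "real (n + k) = real (2 * k * m)" using m by (simp only:)
    hence "real n + real k = 2 * real k * real m" by simp
    thus ?thesis using kp by simp
  qed
  have "real (psi_b {..<n} (Ec k n) k) = (real n + real k) / (2 * real k)"
    using le ge eq by simp
  thus ?thesis using rf by (intro exI[of _ "{..<n}"] exI[of _ "Ec k n"]) simp
qed

theorem theorem1:
  "(\<forall>(V :: 'a set) E n k. rooted_forest V E \<and> card V = n \<and> n \<ge> 1 \<and> k \<ge> 2 \<longrightarrow>
       real (psi_b V E k) \<ge> (real n + real k) / (2 * real k))
   \<and> (\<forall>n k. n \<ge> 1 \<and> k \<ge> 2 \<and> (2 * k) dvd (n + k) \<longrightarrow>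
       (\<exists>(V :: nat set) E. rooted_forest V E \<and> card V = n \<and>
          real (psi_b V E k) = (real n + real k) / (2 * real k)))"
  using part1 part2 by blast

end
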